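(* The set of lower accumulation points for $2$ runners is exactly $\mathcal{S}(1)=\{1/2\}$, and there are no upper accumulation points for $2$ runners.
   Context: For a real number $x$, $\Vert x\Vert$ denotes the distance from $x$ to the nearest integer. For positive integers $v_1,\ldots,v_n$, $\mathrm{ML}(v_1,\ldots,v_n)=\max_{t\in\mathbb{R}}\min_{1\le i\le n}\Vert t v_i\Vert$. Let $\mathcal{S}(n)=\{\mathrm{ML}(v_1,\ldots,v_n): v_1,\ldots,v_n \text{ positive integers}\}$. A real number $A$ is a lower accumulation point for $n$ runners if $\mathcal{S}(n)$ contains a sequence of elements strictly less than $A$ converging to $A$; it is an upper accumulation point for $n$ runners if $\mathcal{S}(n)$ contains a sequence of elements strictly greater than $A$ converging to $A$. *)

theory Defs
  imports Complex_Main
begin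

definition dist_int :: "real \<Rightarrow> real" where
  "dist_int x = (INF k::int. \<bar>x - real_of_int k\<bar>)"

text \<open>ML(v_1,...,v_n) = max over real t of min over i in {1..n} of dist_int (t v_i).
  The maximum is attained, so it is written as a supremum.\<close>
definition lonely :: "nat \<Rightarrow> (nat \<Rightarrow> nat) \<Rightarrow> real" where
  "lonely n v = (SUP t::real. Min ((\<lambda>i. dist_int (t * real (v i))) ` {1..n}))"

definition S :: "nat \<Rightarrow> real set" where
  "S n = {lonely n v | v. \<forall>i\<in>{1..n}. 0 < v i}"

definition lower_acc :: "nat \<Rightarrow> real \<Rightarrow> bool" where
  "lower_acc n A \<longleftrightarrow> (\<exists>s::nat \<Rightarrow> real. (\<forall>k. s k \<in> S n \<and> s k < A) \<and> s \<longlonglongrightarrow> A)"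

definition upper_acc :: "nat \<Rightarrow> real \<Rightarrow> bool" where
  "upper_acc n A \<longleftrightarrow> (\<exists>s::nat \<Rightarrow> real. (\<forall>k. s k \<in> S n \<and> s k > A) \<and> s \<longlonglongrightarrow> A)"

end

theory Submission
  imports Defs
begin

lemma di_le: "dist_int x \<le> \<bar>x - of_int k\<bar>"
  unfolding dist_int_def
  by (rule cINF_lower) (auto intro!: bdd_belowI[where m=0])

lemma di_ge: "(\<And>k. c \<le> \<bar>x - of_int k\<bar>) \<Longrightarrow> c \<le> dist_int x"
  unfolding dist_int_def by (rule cINF_greatest) auto

lemma di_half: "dist_int x \<le> 1/2"
proof (cases "x - of_int (floor x) \<le> 1/2")
  case True
  then show ?thesis using di_le[of x "floor x"] by linarith
next
  case False
  then show ?thesis using di_le[of x "floor x + 1"] by linarith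
qed

lemma di_lower:
  assumes "0 \<le> r" "r \<le> 1/2"
  shows "r \<le> dist_int (of_int j + r)" "r \<le> dist_int (of_int j - r)"
proof -
  { fix k :: int
    have "k = j \<or> k \<le> j - 1 \<or> k \<ge> j + 1" by linarith
    then have "real_of_int k = of_int j \<or> real_of_int k \<le> of_int j - 1 \<or> real_of_int k \<ge> of_int j + 1"
      by (metis of_int_1 of_int_diff of_int_add of_int_le_iff)
  } note * = this
  show "r \<le> dist_int (of_int j + r)"
  proof (rule di_ge)
    fix k show "r \<le> \<bar>of_int j + r - of_int k\<bar>" using *[of k] assms by linarith
  qed
  show "r \<le> dist_int (of_int j - r)"
  proof (rule di_ge)
    fix k show "r \<le> \<bar>of_int j - r - of_int k\<bar>" using *[of k] assms by linarith
  qed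
qed

lemma sup_eq:
  fixes f :: "real \<Rightarrow> real"
  assumes "\<And>t. f t \<le> c" "c \<le> f tt"
  shows "(SUP t. f t) = c"
proof (rule antisym)
  show "(SUP t. f t) \<le> c" by (rule cSUP_least) (use assms in auto)
  show "c \<le> (SUP t. f t)" by (rule cSUP_upper2[where x=tt]) (use assms in \<open>auto intro!: bdd_aboveI[where M=c]\<close>)
qed

lemma frac_part:
  assumes "c < dist_int x"
  obtains p :: int where "c < x - of_int p" "c < of_int p + 1 - x"
proof -
  have "c < \<bar>x - of_int (floor x)\<bar>" "c < \<bar>x - of_int (floor x + 1)\<bar>"
    using di_le assms by (meson less_le_trans)+
  moreover have "of_int (floor x) \<le> x" "x < of_int (floor x) + 1" by linarith+
  ultimately show ?thesis using that[of "floor x"] by auto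
qed

lemma upper_odd:
  fixes a b m :: nat and t :: real
  assumes "a > 0" "b > 0" "a + b = 2*m+1"
  shows "min (dist_int (t*a)) (dist_int (t*b)) \<le> m/(2*m+1)"
proof (rule ccontr)
  define n where "n = 2*real m+1"
  have abm: "real a + real b = 2*real m + 1"
  proof -
    have "real (a + b) = real (2*m+1)" using assms(3) by simp
    then show ?thesis by simp
  qed
  have n: "n = real a + real b" using abm unfolding n_def by simp
  have npos: "n > 0" unfolding n_def by simp
  have nn: "real (2*m+1) = n" unfolding n_def by simp
  assume "\<not> ?thesis"
  then have "\<not> min (dist_int (t*a)) (dist_int (t*b)) \<le> m/n" using nn by simp
  then have h1: "m/n < dist_int (t*a)" and h2: "m/n < dist_int (t*b)" by auto
  obtain p :: int where p: "m/n < t*a - of_int p" "m/n < of_int p + 1 - t*a" by (rule frac_part[OF h1])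
  obtain q :: int where q: "m/n < t*b - of_int q" "m/n < of_int q + 1 - t*b" by (rule frac_part[OF h2])
  define e1 where "e1 = t*a - p - 1/2"
  define e2 where "e2 = t*b - q - 1/2"
  have mn: "m/n = 1/2 - 1/(2*n)" unfolding n_def by (simp add: field_simps)
  have e1: "\<bar>e1\<bar> < 1/(2*n)" using p mn unfolding e1_def by linarith
  have e2: "\<bar>e2\<bar> < 1/(2*n)" using q mn unfolding e2_def by linarith
  define D :: int where "D = 2*(int b*p - int a*q - int a + int m) + 1"
  have "real b * (t*a) = real a * (t*b)" by simp
  then have "real b * (p + 1/2 + e1) = real a * (q + 1/2 + e2)" unfolding e1_def e2_def by simp
  then have eq2: "real b*p + real b/2 + real b*e1 = real a*q + real a/2 + real a*e2"
    by (simp add: algebra_simps)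
  have "real_of_int D = 2*(real b*p) - 2*(real a*q) - 2*real a + 2*real m + 1" by (simp add: D_def)
  then have eqD: "real_of_int D = 2*(real a*e2) - 2*(real b*e1)"
    using eq2 abm by linarith
  have A1: "\<bar>real a*e2\<bar> = real a * \<bar>e2\<bar>" by (simp add: abs_mult)
  have A2: "\<bar>real b*e1\<bar> = real b * \<bar>e1\<bar>" by (simp add: abs_mult)
  have B1: "real a * \<bar>e2\<bar> \<le> real a * (1/(2*n))" by (rule mult_left_mono) (use e2 in auto)
  have B2: "real b * \<bar>e1\<bar> < real b * (1/(2*n))" by (rule mult_strict_left_mono) (use e1 assms(2) in auto)
  have C0: "real a * (1/(2*n)) + real b * (1/(2*n)) = (real a + real b)/(2*n)" by (simp add: add_divide_distrib)
  have C: "real a * (1/(2*n)) + real b * (1/(2*n)) = 1/2" unfolding C0 n[symmetric] using npos by simp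
  have "\<bar>real_of_int D\<bar> < 1" using eqD A1 A2 B1 B2 C by linarith
  then have "D = 0" by linarith
  then show False unfolding D_def by presburger
qed

lemma lower_odd:
  fixes a b m :: nat
  assumes "a > 0" "b > 0" "a + b = 2*m+1" "coprime a b"
  shows "\<exists>t::real. m/(2*m+1) \<le> min (dist_int (t*a)) (dist_int (t*b))"
proof -
  define n where "n = 2*real m+1"
  have abm: "real a + real b = 2*real m + 1"
  proof -
    have "real (a + b) = real (2*m+1)" using assms(3) by simp
    then show ?thesis by simp
  qed
  have nn: "real (2*m+1) = n" unfolding n_def by simp
  have npos: "n > 0" unfolding n_def by simp
  have g1: "gcd a b = 1" using assms(4) by (simp add: coprime_iff_gcd_eq_1)
  have "gcd (int a) (int a + int b) = 1"
  proof -
    have "gcd (int a) (int a + int b) = gcd (int a) (int b)" by simp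
    also have "\<dots> = int (gcd a b)" by simp
    finally show ?thesis using g1 by simp
  qed
  then obtain u v :: int where uv: "u * int a + v * (int a + int b) = 1" using bezout_int by metis
  then have uvr: "real_of_int u * real a + real_of_int v * n = 1" using abm n_def
    by (metis of_int_1 of_int_add of_int_mult of_int_of_nat_eq of_nat_add)
  define k :: int where "k = int m * u"
  define t where "t = real_of_int k / n"
  have ta: "t * real a = real_of_int (- (int m * v)) + m/n"
  proof -
    have "real_of_int k * real a = real m * (real_of_int u * real a)" by (simp add: k_def)
    also have "\<dots> = real m * (1 - real_of_int v * n)" using uvr by simp
    finally have "real_of_int k * real a = real m - real m * real_of_int v * n" by (simp add: algebra_simps)
    then show ?thesis unfolding t_def using npos by (simp add: field_simps)
  qed
  have tb: "t * real b = real_of_int (k + int m * v) - m/n"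
  proof -
    have "real b = n - real a" using abm n_def by simp
    then have "t * real b = t * (n - real a)" by simp
    then have "t * real b = t * n - t * real a" by (simp add: right_diff_distrib)
    also have "t * n = real_of_int k" unfolding t_def using npos by simp
    finally show ?thesis using ta by simp
  qed
  have r0: "0 \<le> m/n" using npos by simp
  have r1: "m/n \<le> 1/2" using npos unfolding n_def by (simp add: field_simps)
  have "m/n \<le> dist_int (t*a)" unfolding ta by (rule di_lower(1)[OF r0 r1])
  moreover have "m/n \<le> dist_int (t*b)" unfolding tb by (rule di_lower(2)[OF r0 r1])
  ultimately show ?thesis unfolding nn by auto
qed

lemma lower_even:
  fixes a b :: nat
  assumes "even (a + b)" "coprime a b"
  shows "1/2 \<le> min (dist_int ((1/2)*a)) (dist_int ((1/2)*b))"
proof -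
  have "odd a"
  proof
    assume "even a"
    then have "even b" using assms(1) by simp
    then have "2 dvd gcd a b" using \<open>even a\<close> by simp
    moreover have "gcd a b = 1" using assms(2) by (simp add: coprime_iff_gcd_eq_1)
    ultimately show False by simp
  qed
  then have "odd b" using assms(1) by simp
  have h: "(1/2) * real c = real_of_int (int ((c - 1) div 2)) + 1/2" if "odd c" for c :: nat
  proof -
    obtain r where "c = 2*r+1" using \<open>odd c\<close> oddE by blast
    then show ?thesis by simp
  qed
  have "1/2 \<le> dist_int ((1/2)*a)" unfolding h[OF \<open>odd a\<close>] by (rule di_lower(1)) auto
  moreover have "1/2 \<le> dist_int ((1/2)*b)" unfolding h[OF \<open>odd b\<close>] by (rule di_lower(1)) auto
  ultimately show ?thesis by simp
qed

lemma lonely2_eq: "lonely 2 v = (SUP t. min (dist_int (t * real (v 1))) (dist_int (t * real (v 2))))"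
proof -
  have "{1..2::nat} = {1,2}" by auto
  then show ?thesis unfolding lonely_def by simp
qed

lemma lonely1_eq: "lonely 1 v = (SUP t. dist_int (t * real (v 1)))"
  unfolding lonely_def by simp

lemma ml2:
  fixes v1 v2 :: nat
  assumes "v1 > 0" "v2 > 0"
  shows "(SUP t::real. min (dist_int (t * real v1)) (dist_int (t * real v2))) = 1/2 \<or>
    (\<exists>m::nat. m > 0 \<and> (SUP t::real. min (dist_int (t * real v1)) (dist_int (t * real v2))) = m/(2*m+1))"
proof -
  define g where "g = gcd v1 v2"
  have gpos: "g > 0" unfolding g_def using assms by simp
  obtain a b where ab: "v1 = a * g" "v2 = b * g" "coprime a b"
    using gcd_coprime_exists[of v1 v2] gpos unfolding g_def by auto
  have apos: "a > 0" "b > 0" using ab assms by auto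
  define F where "F u = min (dist_int (u*a)) (dist_int (u*b))" for u :: real
  have eqF: "min (dist_int (t * real v1)) (dist_int (t * real v2)) = F (t * g)" for t :: real
    unfolding F_def ab by (simp add: mult_ac)
  have gr: "real g > 0" using gpos by simp
  show ?thesis
  proof (cases "even (a+b)")
    case True
    have "(SUP t::real. min (dist_int (t * real v1)) (dist_int (t * real v2))) = 1/2"
    proof (rule sup_eq[where tt = "(1/2)/g"])
      fix t show "min (dist_int (t * real v1)) (dist_int (t * real v2)) \<le> 1/2" using di_half[of "t * real v1"] by linarith
    next
      show "1/2 \<le> min (dist_int ((1/2)/g * real v1)) (dist_int ((1/2)/g * real v2))"
        unfolding eqF using lower_even[OF True ab(3)] gr unfolding F_def by simp
    qed
    then show ?thesis by simp
  next
    case False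
    define m where "m = (a+b) div 2"
    have abm: "a + b = 2*m+1" using False unfolding m_def by presburger
    have mpos: "m > 0" using apos abm by simp
    obtain u where u: "m/(2*m+1) \<le> F u" using lower_odd[OF apos abm ab(3)] unfolding F_def by blast
    have "(SUP t::real. min (dist_int (t * real v1)) (dist_int (t * real v2))) = m/(2*m+1)"
    proof (rule sup_eq[where tt = "u/g"])
      fix t show "min (dist_int (t * real v1)) (dist_int (t * real v2)) \<le> m/(2*m+1)"
        unfolding eqF F_def by (rule upper_odd[OF apos abm])
    next
      show "m/(2*m+1) \<le> min (dist_int (u/g * real v1)) (dist_int (u/g * real v2))"
        unfolding eqF using u gr by simp
    qed
    then show ?thesis using mpos by (intro disjI2 exI[of _ m]) simp
  qed
qed

lemma S1: "S 1 = {1/2}"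
proof -
  have "lonely 1 v = 1/2" if "v 1 > 0" for v :: "nat \<Rightarrow> nat"
    unfolding lonely1_eq
  proof (rule sup_eq[where tt = "(1/2)/real (v 1)"])
    fix t show "dist_int (t * real (v 1)) \<le> 1/2" by (rule di_half)
  next
    have e: "(1/2)/real (v 1) * real (v 1) = real_of_int 0 + 1/2" using that by simp
    show "1/2 \<le> dist_int ((1/2)/real (v 1) * real (v 1))"
      unfolding e by (rule di_lower(1)) auto
  qed
  note * = this
  have "lonely 1 (\<lambda>_. 1) = 1/2" by (rule *) simp
  then have one: "1/2 \<in> S 1" unfolding S_def by (intro CollectI exI[of _ "\<lambda>_. 1::nat"]) auto
  have "S 1 \<subseteq> {1/2}" unfolding S_def using * by auto
  then show ?thesis using one by blast
qed

lemma S2_struct: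
  assumes "x \<in> S 2"
  shows "x \<le> 1/2 \<and> (x = 1/2 \<or> (\<exists>N::nat. 1/(1-2*x) = real N))"
proof -
  obtain v where v: "x = lonely 2 v" "\<forall>i\<in>{1..2}. 0 < v i" using assms unfolding S_def by auto
  have "v 1 > 0" "v 2 > 0" using v(2) by auto
  from ml2[OF this] have "x = 1/2 \<or> (\<exists>m::nat. m > 0 \<and> x = m/(2*m+1))"
    unfolding v(1) lonely2_eq .
  then show ?thesis
  proof
    assume "x = 1/2" then show ?thesis by simp
  next
    assume "\<exists>m::nat. m > 0 \<and> x = m/(2*m+1)"
    then obtain m :: nat where m: "x = real m/(2*real m+1)" by auto
    have "x \<le> 1/2" unfolding m by (simp add: field_simps)
    moreover have "1 - 2*x = 1/(2*m+1)" unfolding m by (simp add: field_simps)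
    then have "1/(1-2*x) = real (2*m+1)" by simp
    ultimately show ?thesis by blast
  qed
qed

lemma S2_seq: "real (k+1) / real (2*(k+1)+1) \<in> S 2"
proof -
  define m :: nat where "m = k+1"
  define b :: nat where "b = 2*m"
  define v :: "nat \<Rightarrow> nat" where "v = (\<lambda>i. if i = 1 then 1 else b)"
  have v1: "v 1 = 1" and v2: "v 2 = b" unfolding v_def by auto
  have a: "(1::nat) > 0" "b > 0" "1 + b = 2*m+1" "coprime (1::nat) b"
    unfolding b_def m_def by auto
  obtain u :: real where u: "real m/real (2*m+1) \<le> min (dist_int (u*real 1)) (dist_int (u*real b))"
  proof -
    from lower_odd[OF a] obtain u :: real where "m/(2*m+1) \<le> min (dist_int (u*real 1)) (dist_int (u*real b))"
      by blast
    then show ?thesis using that by blast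
  qed
  have "lonely 2 v = real m / real (2*m+1)"
    unfolding lonely2_eq v1 v2
  proof (rule sup_eq[where tt = u])
    fix t show "min (dist_int (t * real 1)) (dist_int (t * real b)) \<le> real m / real (2*m+1)"
      by (rule upper_odd[OF a(1-3)])
  next
    show "real m / real (2*m+1) \<le> min (dist_int (u * real 1)) (dist_int (u * real b))"
      by (rule u)
  qed
  moreover have "\<forall>i\<in>{1..2}. 0 < v i" unfolding v_def b_def m_def by auto
  ultimately have "real m / real (2*m+1) \<in> S 2" unfolding S_def by (intro CollectI exI[of _ v]) simp
  then show ?thesis unfolding m_def .
qed

lemma key:
  fixes s :: "nat \<Rightarrow> real"
  assumes sS: "\<And>k. s k \<in> S 2" and sA: "\<And>k. s k \<noteq> A" and lim: "s \<longlonglongrightarrow> A"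
  shows "A = 1/2"
proof (rule ccontr)
  assume A: "A \<noteq> 1/2"
  define f where "f x = 1/(1-2*x)" for x :: real
  have dpos: "\<bar>1/2 - A\<bar> > 0" using A by simp
  obtain N1 where N1: "\<And>k. k \<ge> N1 \<Longrightarrow> \<bar>s k - A\<bar> < \<bar>1/2 - A\<bar>"
    using LIMSEQ_D[OF lim dpos] by auto
  have "(\<lambda>k. f (s k)) \<longlonglongrightarrow> f A"
    unfolding f_def by (rule tendsto_divide tendsto_diff tendsto_mult tendsto_const lim | use A in simp)+
  from LIMSEQ_D[OF this, of "1/2"]
  obtain N2 where N2: "\<And>k. k \<ge> N2 \<Longrightarrow> \<bar>f (s k) - f A\<bar> < 1/2" by auto
  define N where "N = max N1 N2"
  have nat: "\<exists>M::nat. f (s k) = real M" if "k \<ge> N" for k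
  proof -
    have "s k \<noteq> 1/2" using N1[of k] that unfolding N_def by auto
    then show ?thesis using S2_struct[OF sS[of k]] unfolding f_def by auto
  qed
  have ne: "s k \<noteq> 1/2" if "k \<ge> N" for k using N1[of k] that unfolding N_def by auto
  have const: "s k = s N" if kN: "k \<ge> N" for k
  proof -
    obtain M1 :: nat where M1: "f (s k) = real M1" using nat[OF kN] by blast
    obtain M2 :: nat where M2: "f (s N) = real M2" using nat by blast
    have a1: "\<bar>f (s k) - f A\<bar> < 1/2" using N2 kN unfolding N_def by auto
    have a2: "\<bar>f (s N) - f A\<bar> < 1/2" using N2 unfolding N_def by auto
    have "\<bar>f (s k) - f (s N)\<bar> < 1" using a1 a2 by linarith
    then have "M1 = M2" using M1 M2 by linarith
    then have "f (s k) = f (s N)" using M1 M2 by simp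
    then have "1 - 2 * s k = 1 - 2 * s N" unfolding f_def using ne[OF kN] ne[of N] by simp
    then show ?thesis by simp
  qed
  have r: "\<bar>s N - A\<bar> > 0" using sA[of N] by simp
  obtain K where K: "\<And>k. k \<ge> K \<Longrightarrow> \<bar>s k - A\<bar> < \<bar>s N - A\<bar>" using LIMSEQ_D[OF lim r] by auto
  show False using K[of "max K N"] const[of "max K N"] by simp
qed

theorem theorem9p3:
  shows "{A. lower_acc 2 A} = S 1 \<and> S 1 = {1/2} \<and> {A. upper_acc 2 A} = {}"
proof -
  have low: "{A. lower_acc 2 A} = {1/2}"
  proof
    show "{A. lower_acc 2 A} \<subseteq> {1/2}"
    proof
      fix A assume "A \<in> {A. lower_acc 2 A}"
      then obtain s where s: "\<forall>k. s k \<in> S 2 \<and> s k < A" "s \<longlonglongrightarrow> A" unfolding lower_acc_def by auto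
      have "A = 1/2" by (rule key[of s]) (use s in \<open>auto dest: less_imp_neq\<close>)
      then show "A \<in> {1/2}" by simp
    qed
  next
    define s :: "nat \<Rightarrow> real" where "s k = real (k+1) / real (2*(k+1)+1)" for k
    have P: "\<forall>k. s k \<in> S 2 \<and> s k < 1/2" unfolding s_def using S2_seq by (auto simp: field_simps)
    have L0: "(\<lambda>k. inverse (real (Suc ((k+1)*2)))) \<longlonglongrightarrow> 0"
      using LIMSEQ_ignore_initial_segment[OF LIMSEQ_linear[OF LIMSEQ_inverse_real_of_nat, of 2], of 1] by simp
    have L1: "(\<lambda>k. 1/2 - 1/2 * inverse (real (Suc ((k+1)*2)))) \<longlonglongrightarrow> 1/2 - 1/2*0"
      by (intro tendsto_intros L0)
    have "s k = 1/2 - 1/2 * inverse (real (Suc ((k+1)*2)))" for k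
      unfolding s_def by (simp add: field_simps)
    then have "s = (\<lambda>k. 1/2 - 1/2 * inverse (real (Suc ((k+1)*2))))" by auto
    then have lim: "s \<longlonglongrightarrow> 1/2" using L1 by simp
    show "{1/2} \<subseteq> {A. lower_acc 2 A}" unfolding lower_acc_def using P lim by blast
  qed
  have up: "{A. upper_acc 2 A} = {}"
  proof (rule ccontr)
    assume "{A. upper_acc 2 A} \<noteq> {}"
    then obtain A s where s: "\<forall>k. s k \<in> S 2 \<and> s k > A" "s \<longlonglongrightarrow> A" unfolding upper_acc_def by auto
    have "A = 1/2" by (rule key[of s]) (use s in \<open>auto dest: less_imp_neq\<close>)
    then show False using s(1) S2_struct by force
  qed
  show ?thesis using low up S1 by simp
qed

end
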